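(* Suppose that (i) $K:\mathbb R^p\rightrightarrows\mathbb R^n$ is concave, and (ii) $f:\mathbb R^p\times\mathbb R^n\times\mathbb R^n\to\mathbb R^m$ is $C$-concave. Then $\nu(\xi,x)=\sup_{z\in K(\xi)}\operatorname{dist}(f(\xi,x,z),C)$ is a convex function (with values in $[0,+\infty]$) on $\mathbb R^p\times\mathbb R^n$.
   Context: $C\subset\mathbb R^m$ is a nontrivial closed, convex, pointed cone; $K$ has closed graph and nonempty values (standing assumption). A mapping $g:X\to Y$ is $C$-concave if $g(tx_1+(1-t)x_2)-tg(x_1)-(1-t)g(x_2)\in C$ for all $x_1,x_2\in X$, $t\in[0,1]$. A set-valued mapping $F:X\rightrightarrows Y$ is concave if $F(tx_1+(1-t)x_2)\subseteq tF(x_1)+(1-t)F(x_2)$ for all $x_1,x_2$, $t\in[0,1]$. *)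

theory Defs
  imports "HOL-Analysis.Analysis"
begin

definition closed_convex_pointed_cone :: "'a::euclidean_space set \<Rightarrow> bool" where
  "closed_convex_pointed_cone C \<longleftrightarrow>
     cone C \<and> closed C \<and> convex C \<and> C \<inter> uminus ` C = {0} \<and> C \<noteq> {0}"

definition C_concave :: "'c::real_vector set \<Rightarrow> ('a::real_vector \<Rightarrow> 'c) \<Rightarrow> bool" where
  "C_concave C g \<longleftrightarrow>
     (\<forall>x1 x2 t. 0 \<le> t \<and> t \<le> 1 \<longrightarrow>
        g (t *\<^sub>R x1 + (1 - t) *\<^sub>R x2) - t *\<^sub>R g x1 - (1 - t) *\<^sub>R g x2 \<in> C)"

definition setvalued_concave :: "('a::real_vector \<Rightarrow> 'b::real_vector set) \<Rightarrow> bool" where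
  "setvalued_concave F \<longleftrightarrow>
     (\<forall>x1 x2 t. 0 \<le> t \<and> t \<le> 1 \<longrightarrow>
        F (t *\<^sub>R x1 + (1 - t) *\<^sub>R x2) \<subseteq>
          {t *\<^sub>R a + (1 - t) *\<^sub>R b | a b. a \<in> F x1 \<and> b \<in> F x2})"

text \<open>Convexity of an extended-real-valued function (values in [0,+inf] here),
  using extended-real arithmetic (0 * inf = 0).\<close>
definition ereal_convex_fun :: "('a::real_vector \<Rightarrow> ereal) \<Rightarrow> bool" where
  "ereal_convex_fun h \<longleftrightarrow>
     (\<forall>u v t. 0 \<le> t \<and> t \<le> 1 \<longrightarrow>
        h (t *\<^sub>R u + (1 - t) *\<^sub>R v) \<le> ereal t * h u + ereal (1 - t) * h v)"

end

theory Submission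
  imports Defs
begin

lemma infdist_attain:
  fixes C :: "'m::euclidean_space set"
  assumes "closed C" "C \<noteq> {}"
  obtains x where "x \<in> C" "infdist a C = dist a x"
proof -
  obtain x where x1: "x \<in> C" and x2: "\<And>y. y \<in> C \<Longrightarrow> dist a x \<le> dist a y"
    using distance_attains_inf[OF assms, where a=a] by metis
  have x: "x \<in> C" "\<forall>y\<in>C. dist a x \<le> dist a y" using x1 x2 by auto
  have "infdist a C \<le> dist a x" using infdist_le[OF x(1)] .
  moreover have "dist a x \<le> infdist a C"
    unfolding infdist_notempty[OF assms(2)]
    using x(2) assms(2) by (intro cINF_greatest) auto
  ultimately have "infdist a C = dist a x" by (rule antisym)
  then show ?thesis using that x(1) by blast
qed

lemma cone_bound:
  fixes C :: "'m::euclidean_space set"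
  assumes C: "closed_convex_pointed_cone C" and c: "c \<in> C" and t: "0 \<le> t" "t \<le> 1"
  shows "infdist (t *\<^sub>R y1 + (1 - t) *\<^sub>R y2 + c) C \<le> t * infdist y1 C + (1 - t) * infdist y2 C"
proof -
  have cc: "cone C" "closed C" "convex C"
    using C unfolding closed_convex_pointed_cone_def by blast+
  have "C \<inter> uminus ` C = {0}" using C unfolding closed_convex_pointed_cone_def by blast
  then have z: "0 \<in> C" by (metis IntD1 singletonI)
  have cc2: "(\<forall>x\<in>C. \<forall>y\<in>C. x + y \<in> C) \<and> (\<forall>x\<in>C. \<forall>c\<ge>0. c *\<^sub>R x \<in> C)"
    using convex_cone[of C] cc(1,3) by blast
  have add: "\<And>x y. x \<in> C \<Longrightarrow> y \<in> C \<Longrightarrow> x + y \<in> C" using cc2 by blast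
  have sc: "\<And>x k. x \<in> C \<Longrightarrow> 0 \<le> k \<Longrightarrow> k *\<^sub>R x \<in> C" using cc2 by blast
  have ne: "C \<noteq> {}" using z by blast
  obtain x1 where x1: "x1 \<in> C" "infdist y1 C = dist y1 x1" using infdist_attain[OF cc(2) ne] by blast
  obtain x2 where x2: "x2 \<in> C" "infdist y2 C = dist y2 x2" using infdist_attain[OF cc(2) ne] by blast
  have m: "t *\<^sub>R x1 + (1 - t) *\<^sub>R x2 + c \<in> C"
    using x1(1) x2(1) c t by (intro add sc) auto
  have "infdist (t *\<^sub>R y1 + (1 - t) *\<^sub>R y2 + c) C
      \<le> dist (t *\<^sub>R y1 + (1 - t) *\<^sub>R y2 + c) (t *\<^sub>R x1 + (1 - t) *\<^sub>R x2 + c)"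
    using infdist_le[OF m] .
  also have "\<dots> = norm (t *\<^sub>R (y1 - x1) + (1 - t) *\<^sub>R (y2 - x2))"
    by (simp add: dist_norm algebra_simps)
  also have "\<dots> \<le> norm (t *\<^sub>R (y1 - x1)) + norm ((1 - t) *\<^sub>R (y2 - x2))"
    by (rule norm_triangle_ineq)
  also have "\<dots> = t * dist y1 x1 + (1 - t) * dist y2 x2"
    using t by (simp add: dist_norm)
  finally show ?thesis using x1 x2 by simp
qed

theorem mainTheorem4:
  fixes C :: "'m::euclidean_space set"
    and K :: "'p::euclidean_space \<Rightarrow> 'n::euclidean_space set"
    and f :: "'p \<times> 'n \<times> 'n \<Rightarrow> 'm"
  assumes C: "closed_convex_pointed_cone C"
    and K_graph: "closed {(\<xi>, z). z \<in> K \<xi>}"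
    and K_ne: "\<And>\<xi>. K \<xi> \<noteq> {}"
    and K_conc: "setvalued_concave K"
    and f_conc: "C_concave C f"
  shows "ereal_convex_fun (\<lambda>(\<xi>, x). SUP z\<in>K \<xi>. ereal (infdist (f (\<xi>, x, z)) C))"
  unfolding ereal_convex_fun_def
proof (intro allI impI)
  fix u v :: "'p \<times> 'n" and t :: real
  assume t: "0 \<le> t \<and> t \<le> 1"
  obtain \<xi>1 x1 where u: "u = (\<xi>1, x1)" by (cases u)
  obtain \<xi>2 x2 where v: "v = (\<xi>2, x2)" by (cases v)
  define N where "N = (\<lambda>\<xi> x. SUP z\<in>K \<xi>. ereal (infdist (f (\<xi>, x, z)) C))"
  have "N (t *\<^sub>R \<xi>1 + (1 - t) *\<^sub>R \<xi>2) (t *\<^sub>R x1 + (1 - t) *\<^sub>R x2)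
        \<le> ereal t * N \<xi>1 x1 + ereal (1 - t) * N \<xi>2 x2"
    unfolding N_def
  proof (rule SUP_least)
    fix z assume z: "z \<in> K (t *\<^sub>R \<xi>1 + (1 - t) *\<^sub>R \<xi>2)"
    then obtain a b where ab: "a \<in> K \<xi>1" "b \<in> K \<xi>2" "z = t *\<^sub>R a + (1 - t) *\<^sub>R b"
      using K_conc t unfolding setvalued_concave_def by blast
    define w1 where "w1 = (\<xi>1, x1, a)"
    define w2 where "w2 = (\<xi>2, x2, b)"
    have wz: "t *\<^sub>R w1 + (1 - t) *\<^sub>R w2 = (t *\<^sub>R \<xi>1 + (1 - t) *\<^sub>R \<xi>2, t *\<^sub>R x1 + (1 - t) *\<^sub>R x2, z)"
      using ab by (simp add: w1_def w2_def)
    define c where "c = f (t *\<^sub>R w1 + (1 - t) *\<^sub>R w2) - t *\<^sub>R f w1 - (1 - t) *\<^sub>R f w2"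
    have c: "c \<in> C" using f_conc t unfolding C_concave_def c_def by blast
    have feq: "f (t *\<^sub>R w1 + (1 - t) *\<^sub>R w2) = t *\<^sub>R f w1 + (1 - t) *\<^sub>R f w2 + c"
      by (simp add: c_def)
    have r: "infdist (f (t *\<^sub>R w1 + (1 - t) *\<^sub>R w2)) C \<le> t * infdist (f w1) C + (1 - t) * infdist (f w2) C"
      unfolding feq using cone_bound[OF C c] t by blast
    have s1: "ereal (infdist (f w1) C) \<le> (SUP z\<in>K \<xi>1. ereal (infdist (f (\<xi>1, x1, z)) C))"
      unfolding w1_def using ab(1) by (rule SUP_upper)
    have s2: "ereal (infdist (f w2) C) \<le> (SUP z\<in>K \<xi>2. ereal (infdist (f (\<xi>2, x2, z)) C))"
      unfolding w2_def using ab(2) by (rule SUP_upper)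
    have "ereal (infdist (f (t *\<^sub>R w1 + (1 - t) *\<^sub>R w2)) C)
          \<le> ereal t * ereal (infdist (f w1) C) + ereal (1 - t) * ereal (infdist (f w2) C)"
      using r by simp
    also have "\<dots> \<le> ereal t * (SUP z\<in>K \<xi>1. ereal (infdist (f (\<xi>1, x1, z)) C))
                   + ereal (1 - t) * (SUP z\<in>K \<xi>2. ereal (infdist (f (\<xi>2, x2, z)) C))"
      apply (rule add_mono)
       apply (rule ereal_mult_left_mono[OF s1]) using t apply simp
      apply (rule ereal_mult_left_mono[OF s2]) using t apply simp
      done
    finally show "ereal (infdist (f (t *\<^sub>R \<xi>1 + (1 - t) *\<^sub>R \<xi>2, t *\<^sub>R x1 + (1 - t) *\<^sub>R x2, z)) C)
          \<le> ereal t * (SUP z\<in>K \<xi>1. ereal (infdist (f (\<xi>1, x1, z)) C))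
                   + ereal (1 - t) * (SUP z\<in>K \<xi>2. ereal (infdist (f (\<xi>2, x2, z)) C))"
      unfolding wz .
  qed
  then show "(\<lambda>(\<xi>, x). SUP z\<in>K \<xi>. ereal (infdist (f (\<xi>, x, z)) C)) (t *\<^sub>R u + (1 - t) *\<^sub>R v)
         \<le> ereal t * (\<lambda>(\<xi>, x). SUP z\<in>K \<xi>. ereal (infdist (f (\<xi>, x, z)) C)) u +
            ereal (1 - t) * (\<lambda>(\<xi>, x). SUP z\<in>K \<xi>. ereal (infdist (f (\<xi>, x, z)) C)) v"
    by (simp add: u v N_def)
qed

end
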